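(* Let $n\ge1$, let $L_1,\dots,L_N$ be complex $n\times n$ matrices, let $\pi_1,\dots,\pi_n$ be mutually orthogonal rank-one orthogonal projectors on $\mathbb{C}^n$, let $w_{jk}:=\sum_{\alpha=1}^N \mathrm{Tr}(\pi_j L_\alpha\pi_k L_\alpha^\dagger)$ for $j\neq k$, and let $\Omega$ be the matrix with $\Omega_{jk}=w_{jk}$ ($j\ne k$) and $\Omega_{kk}=-\sum_{l\ne k}w_{lk}$. Let $N_1,\dots,N_{n_B}$ be the vertex sets of the basins of $G_\Omega$, $N_B=\bigcup_\eta N_\eta$, and let $G'_\Omega$ be the graph obtained from $G_\Omega$ by removing every edge whose two endpoints lie in the same basin. Then the kernel of $\Omega^T$ is spanned by the linearly independent vectors $$\kappa'_\eta := \Big(\sum_{\tau\in T_B(G'_\Omega)} W(\tau)\Big)\sum_{j\in N_\eta} e_j + \sum_{l\notin N_B}\ \sum_{\tau\in T_B(G'_\Omega,\eta,l)} W(\tau)\, e_l,\qquad \eta=1,\dots,n_B.$$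
   Context: $G_\Omega$ is the directed graph on $\{1,\dots,n\}$ with a directed edge from $k$ to $j$ of weight $w_{jk}$ for each $j\ne k$ with $w_{jk}\ne0$. A basin is a strongly connected component with no edge leaving it. $e_j$ is the $j$-th standard basis vector. For a digraph $G$ on $\{1,\dots,n\}$, $T_B(G)$ is the set of spanning forests of $G$ whose set of roots is exactly $N_B$: subgraphs containing all $n$ vertices, with no directed cycles, in which every vertex of $N_B$ has no outgoing edge and every vertex outside $N_B$ has exactly one outgoing edge. $T_B(G,\eta,l)$ is the set of forests in $T_B(G)$ in which vertex $l$ lies in a tree rooted at a vertex of $N_\eta$. $W(\tau)$ is the product of the edge weights of $\tau$, with $W(\tau)=1$ if $\tau$ has no edges. *)

theory Defs
  imports "HOL-Analysis.Analysis"
begin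

definition cnj_transpose :: "complex^'n^'m \<Rightarrow> complex^'m^'n" where
  "cnj_transpose A = (\<chi> i j. cnj (A $ j $ i))"

definition rank_one_orth_proj :: "complex^'n^'n \<Rightarrow> bool" where
  "rank_one_orth_proj P \<longleftrightarrow> P ** P = P \<and> cnj_transpose P = P \<and> rank P = 1"

text \<open>Weighted digraph on the vertex type 'n given by a weight function wt,
  where wt j k is the weight of the edge from k to j (present iff j \<noteq> k and wt j k \<noteq> 0).\<close>
definition wedges :: "('n \<Rightarrow> 'n \<Rightarrow> complex) \<Rightarrow> ('n \<times> 'n) set" where
  "wedges wt = {(k, j). j \<noteq> k \<and> wt j k \<noteq> 0}"

definition strongly_connected_component :: "('n \<times> 'n) set \<Rightarrow> 'n set \<Rightarrow> bool" where
  "strongly_connected_component E C \<longleftrightarrow>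
     C \<noteq> {} \<and> (\<forall>x\<in>C. \<forall>y\<in>C. (x, y) \<in> E\<^sup>*) \<and>
     (\<forall>x\<in>C. \<forall>y. (x, y) \<in> E\<^sup>* \<and> (y, x) \<in> E\<^sup>* \<longrightarrow> y \<in> C)"

definition is_basin :: "('n \<times> 'n) set \<Rightarrow> 'n set \<Rightarrow> bool" where
  "is_basin E C \<longleftrightarrow> strongly_connected_component E C \<and> (\<forall>x\<in>C. \<forall>y. (x, y) \<in> E \<longrightarrow> y \<in> C)"

definition basins :: "('n \<times> 'n) set \<Rightarrow> 'n set set" where
  "basins E = {C. is_basin E C}"

definition remove_basin_edges :: "('n \<Rightarrow> 'n \<Rightarrow> complex) \<Rightarrow> ('n \<Rightarrow> 'n \<Rightarrow> complex)" where
  "remove_basin_edges wt = (\<lambda>j k. if \<exists>C\<in>basins (wedges wt). j \<in> C \<and> k \<in> C then 0 else wt j k)"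

definition spanning_forests :: "('n \<times> 'n) set \<Rightarrow> 'n set \<Rightarrow> ('n \<times> 'n) set set" where
  "spanning_forests E R = {F. F \<subseteq> E \<and> acyclic F \<and>
      (\<forall>x\<in>R. \<forall>y. (x, y) \<notin> F) \<and> (\<forall>x. x \<notin> R \<longrightarrow> (\<exists>!y. (x, y) \<in> F))}"

definition spanning_forests_to :: "('n \<times> 'n) set \<Rightarrow> 'n set \<Rightarrow> 'n set \<Rightarrow> 'n \<Rightarrow> ('n \<times> 'n) set set" where
  "spanning_forests_to E R Neta l = {F \<in> spanning_forests E R. \<exists>r\<in>Neta. (l, r) \<in> F\<^sup>*}"

definition forest_weight :: "('n \<Rightarrow> 'n \<Rightarrow> complex) \<Rightarrow> ('n \<times> 'n) set \<Rightarrow> complex" where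
  "forest_weight wt F = (\<Prod>(k, j)\<in>F. wt j k)"

end

theory Submission
  imports Defs
begin


lemma sf_single_valued:
  assumes "F \<in> spanning_forests E R" shows "single_valued F"
  using assms unfolding spanning_forests_def single_valued_def by blast

lemma sf_root_rtrancl:
  assumes "F \<in> spanning_forests E R" "r \<in> R" "(r, y) \<in> F\<^sup>*" shows "y = r"
  using assms(3) assms(1,2) unfolding spanning_forests_def
  by (auto elim: converse_rtranclE)

lemma sf_reach_root:
  fixes F :: "('n::finite \<times> 'n) set"
  assumes "F \<in> spanning_forests E R" shows "\<exists>r\<in>R. (x, r) \<in> F\<^sup>*"
proof -
  have ac: "acyclic F" using assms unfolding spanning_forests_def by blast
  have "wf (F\<inverse>)" by (rule finite_acyclic_wf) (use ac in auto)
  then obtain z where z: "z \<in> {z. (x, z) \<in> F\<^sup>*}" and zmin: "\<forall>y. (y, z) \<in> F\<inverse> \<longrightarrow> y \<notin> {z. (x, z) \<in> F\<^sup>*}"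
    using wf_eq_minimal[of "F\<inverse>"] by blast
  have "\<forall>y. (z, y) \<notin> F"
  proof (intro allI notI)
    fix y assume "(z, y) \<in> F"
    then have "(x, y) \<in> F\<^sup>*" using z by auto
    then show False using zmin \<open>(z, y) \<in> F\<close> by auto
  qed
  then have "z \<in> R" using assms unfolding spanning_forests_def by blast
  then show ?thesis using z by blast
qed

lemma sf_root_unique:
  assumes "F \<in> spanning_forests E R" "r1 \<in> R" "r2 \<in> R" "(x, r1) \<in> F\<^sup>*" "(x, r2) \<in> F\<^sup>*"
  shows "r1 = r2"
proof -
  have "(r1, r2) \<in> F\<^sup>* \<or> (r2, r1) \<in> F\<^sup>*"
    using single_valued_confluent[OF sf_single_valued[OF assms(1)] assms(4,5)] .
  then show ?thesis using sf_root_rtrancl[OF assms(1)] assms(2,3) by metis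
qed

lemma sf_insert:
  fixes g :: "('n::finite \<times> 'n) set"
  assumes k: "k \<notin> R" and g: "g \<in> spanning_forests E (insert k R)"
    and kj: "(k, j) \<in> E" and jr: "\<exists>r\<in>R. (j, r) \<in> g\<^sup>*"
  shows "insert (k, j) g \<in> spanning_forests E R"
proof -
  have jk: "(j, k) \<notin> g\<^sup>*"
  proof
    assume "(j, k) \<in> g\<^sup>*"
    moreover obtain r where "r \<in> R" "(j, r) \<in> g\<^sup>*" using jr by blast
    ultimately have "k = r" using sf_root_unique[OF g] by blast
    then show False using k \<open>r \<in> R\<close> by blast
  qed
  have kn: "\<forall>y. (k, y) \<notin> g" using g unfolding spanning_forests_def by blast
  have gE: "g \<subseteq> E" and acg: "acyclic g" and rt: "\<forall>x\<in>insert k R. \<forall>y. (x, y) \<notin> g"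
    and nr: "\<forall>x. x \<notin> insert k R \<longrightarrow> (\<exists>!y. (x, y) \<in> g)"
    using g unfolding spanning_forests_def by blast+
  have "\<exists>!y. (x, y) \<in> insert (k, j) g" if "x \<notin> R" for x
  proof (cases "x = k")
    case True then show ?thesis using kn by auto
  next
    case False
    then have "\<exists>!y. (x, y) \<in> g" using nr that by blast
    then show ?thesis using False by auto
  qed
  moreover have "insert (k, j) g \<subseteq> E" using gE kj by blast
  moreover have "acyclic (insert (k, j) g)" unfolding acyclic_insert using acg jk by blast
  moreover have "\<forall>x\<in>R. \<forall>y. (x, y) \<notin> insert (k, j) g" using rt k by blast
  ultimately show ?thesis unfolding spanning_forests_def by blast
qed

lemma sf_remove:
  fixes F :: "('n::finite \<times> 'n) set"
  assumes k: "k \<notin> R" and F: "F \<in> spanning_forests E R"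
  obtains j g where "F = insert (k, j) g" "g \<in> spanning_forests E (insert k R)"
    "(k, j) \<in> E" "\<exists>r\<in>R. (j, r) \<in> g\<^sup>*" "(k, j) \<notin> g"
proof -
  obtain j where j: "(k, j) \<in> F" "\<forall>y. (k, y) \<in> F \<longrightarrow> y = j" using F k unfolding spanning_forests_def by blast
  define g where "g = F - {(k, j)}"
  have Fg: "F = insert (k, j) g" using j g_def by blast
  have acF: "acyclic F" using F unfolding spanning_forests_def by blast
  have FE: "F \<subseteq> E" and rt: "\<forall>x\<in>R. \<forall>y. (x, y) \<notin> F"
    and nr: "\<forall>x. x \<notin> R \<longrightarrow> (\<exists>!y. (x, y) \<in> F)"
    using F unfolding spanning_forests_def by blast+
  have "\<exists>!y. (x, y) \<in> g" if "x \<notin> insert k R" for x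
  proof -
    have "\<exists>!y. (x, y) \<in> F" using nr that by blast
    then show ?thesis using that unfolding g_def by auto
  qed
  moreover have "g \<subseteq> E" using FE g_def by blast
  moreover have "acyclic g" using acF g_def by (meson Diff_subset acyclic_subset)
  moreover have "\<forall>x\<in>insert k R. \<forall>y. (x, y) \<notin> g" using rt j g_def by blast
  ultimately have gsf: "g \<in> spanning_forests E (insert k R)" unfolding spanning_forests_def by blast
  have jk: "(j, k) \<notin> g\<^sup>*" using acF unfolding Fg acyclic_insert by blast
  obtain r where r: "r \<in> insert k R" "(j, r) \<in> g\<^sup>*" using sf_reach_root[OF gsf] by blast
  have "r \<in> R" using r jk by auto
  moreover have "(k, j) \<in> E" using F j unfolding spanning_forests_def by blast
  ultimately show ?thesis using that Fg gsf r g_def by blast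
qed

lemma sf_sum_split:
  fixes h :: "('n::finite \<times> 'n) set \<Rightarrow> 'a::comm_monoid_add"
  assumes k: "k \<notin> R"
  shows "(\<Sum>F\<in>spanning_forests E R. h F) =
    (\<Sum>g\<in>spanning_forests E (insert k R). \<Sum>j\<in>{j. (k, j) \<in> E \<and> (\<exists>r\<in>R. (j, r) \<in> g\<^sup>*)}. h (insert (k, j) g))"
proof -
  let ?S = "Sigma (spanning_forests E (insert k R)) (\<lambda>g. {j. (k, j) \<in> E \<and> (\<exists>r\<in>R. (j, r) \<in> g\<^sup>*)})"
  have bij: "bij_betw (\<lambda>(g, j). insert (k, j) g) ?S (spanning_forests E R)"
    unfolding bij_betw_def
  proof (intro conjI)
    show "inj_on (\<lambda>(g, j). insert (k, j) g) ?S"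
    proof (rule inj_onI, clarify)
      fix g1 j1 g2 j2
      assume g1: "g1 \<in> spanning_forests E (insert k R)" and g2: "g2 \<in> spanning_forests E (insert k R)"
        and eq: "insert (k, j1) g1 = insert (k, j2) g2"
      have n1: "\<forall>y. (k, y) \<notin> g1" using g1 unfolding spanning_forests_def by blast
      have n2: "\<forall>y. (k, y) \<notin> g2" using g2 unfolding spanning_forests_def by blast
      have "j1 = j2" using eq n1 n2 by blast
      moreover have "g1 = g2"
      proof -
        have "g1 = insert (k, j1) g1 - {(k, j1)}" using n1 by blast
        also have "\<dots> = insert (k, j2) g2 - {(k, j2)}" using eq \<open>j1 = j2\<close> by simp
        also have "\<dots> = g2" using n2 by blast
        finally show ?thesis .
      qed
      ultimately show "g1 = g2 \<and> j1 = j2" by blast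
    qed
    show "(\<lambda>(g, j). insert (k, j) g) ` ?S = spanning_forests E R"
    proof
      show "(\<lambda>(g, j). insert (k, j) g) ` ?S \<subseteq> spanning_forests E R"
        using sf_insert[OF k] by auto
      show "spanning_forests E R \<subseteq> (\<lambda>(g, j). insert (k, j) g) ` ?S"
      proof
        fix F assume "F \<in> spanning_forests E R"
        then obtain j g where "F = insert (k, j) g" "g \<in> spanning_forests E (insert k R)"
          "(k, j) \<in> E" "\<exists>r\<in>R. (j, r) \<in> g\<^sup>*"
          using sf_remove[OF k] by metis
        then show "F \<in> (\<lambda>(g, j). insert (k, j) g) ` ?S" by force
      qed
    qed
  qed
  have "(\<Sum>F\<in>spanning_forests E R. h F) = (\<Sum>x\<in>?S. h ((\<lambda>(g, j). insert (k, j) g) x))"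
    using sum.reindex_bij_betw[OF bij, of h] by simp
  also have "\<dots> = (\<Sum>g\<in>spanning_forests E (insert k R). \<Sum>j\<in>{j. (k, j) \<in> E \<and> (\<exists>r\<in>R. (j, r) \<in> g\<^sup>*)}. h (insert (k, j) g))"
    by (subst sum.Sigma) (auto simp: case_prod_beta)
  finally show ?thesis .
qed


lemma sf_insert_reach:
  fixes g :: "('n::finite \<times> 'n) set"
  assumes k: "k \<notin> R" and g: "g \<in> spanning_forests E (insert k R)" and N: "N \<subseteq> R"
  shows "(\<exists>r\<in>N. (i, r) \<in> (insert (k, j) g)\<^sup>*) \<longleftrightarrow>
    (if (\<exists>r\<in>R. (i, r) \<in> g\<^sup>*) then (\<exists>r\<in>N. (i, r) \<in> g\<^sup>*) else (\<exists>r\<in>N. (j, r) \<in> g\<^sup>*))"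
proof (cases "\<exists>r\<in>R. (i, r) \<in> g\<^sup>*")
  case True
  then obtain r where r: "r \<in> R" "(i, r) \<in> g\<^sup>*" by blast
  have "(i, k) \<notin> g\<^sup>*"
  proof
    assume "(i, k) \<in> g\<^sup>*"
    then have "k = r" using sf_root_unique[OF g, of k r i] r by blast
    then show False using k r by blast
  qed
  then show ?thesis using True unfolding rtrancl_insert by auto
next
  case False
  then obtain r where r: "r \<in> insert k R" "(i, r) \<in> g\<^sup>*" using sf_reach_root[OF g] by blast
  then have "(i, k) \<in> g\<^sup>*" using False by auto
  then show ?thesis using False N unfolding rtrancl_insert by auto
qed

lemma harm_alg:
  fixes c f :: "'n::finite \<Rightarrow> complex"
  assumes "k \<notin> RB"
  shows "(\<Sum>j\<in>UNIV-{k}. c j * (\<Sum>j'\<in>RB. c j' * ((if j \<in> RB then f j else f j') - f j'))) = 0"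
proof -
  have "(\<Sum>j\<in>UNIV-{k}. c j * (\<Sum>j'\<in>RB. c j' * ((if j \<in> RB then f j else f j') - f j')))
      = (\<Sum>j\<in>RB. c j * (\<Sum>j'\<in>RB. c j' * (f j - f j')))"
    by (rule sum.mono_neutral_cong_right) (use assms in auto)
  also have "\<dots> = (\<Sum>j\<in>RB. \<Sum>j'\<in>RB. c j * c j' * f j) - (\<Sum>j\<in>RB. \<Sum>j'\<in>RB. c j * c j' * f j')"
    by (simp add: sum_distrib_left algebra_simps sum_subtractf)
  also have "(\<Sum>j\<in>RB. \<Sum>j'\<in>RB. c j * c j' * f j') = (\<Sum>j\<in>RB. \<Sum>j'\<in>RB. c j * c j' * f j)"
    by (subst sum.swap) (simp add: mult.commute)
  finally show ?thesis by simp
qed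





locale wg =
  fixes w :: "'n::finite \<Rightarrow> 'n \<Rightarrow> complex" and r :: "'n \<Rightarrow> 'n \<Rightarrow> real"
  assumes wr: "\<And>j k. j \<noteq> k \<Longrightarrow> w j k = of_real (r j k)"
    and rnn: "\<And>j k. j \<noteq> k \<Longrightarrow> r j k \<ge> 0"
begin

abbreviation "E \<equiv> wedges w"
abbreviation "Bs \<equiv> basins E"
abbreviation "B \<equiv> \<Union>Bs"
abbreviation "w' \<equiv> remove_basin_edges w"
abbreviation "E' \<equiv> wedges w'"

lemma E_iff: "(k, j) \<in> E \<longleftrightarrow> j \<noteq> k \<and> w j k \<noteq> 0"
  unfolding wedges_def by simp

lemma basin_closed:
  assumes "C \<in> Bs" "x \<in> C" "(x, y) \<in> E\<^sup>*" shows "y \<in> C"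
  using assms(3,1,2)
proof (induction rule: rtrancl_induct)
  case (step y z)
  then have "y \<in> C" by blast
  then show ?case using step(2,4) unfolding basins_def is_basin_def by blast
qed simp

lemma basin_conn:
  assumes "C \<in> Bs" "x \<in> C" "y \<in> C" shows "(x, y) \<in> E\<^sup>*"
proof -
  have "strongly_connected_component E C" using assms(1) unfolding basins_def is_basin_def by blast
  then show ?thesis using assms(2,3) unfolding strongly_connected_component_def by blast
qed

lemma basin_disj:
  assumes "C1 \<in> Bs" "C2 \<in> Bs" "x \<in> C1" "x \<in> C2" shows "C1 = C2"
proof -
  have "y \<in> C2" if "C1 \<in> Bs" "C2 \<in> Bs" "x \<in> C1" "x \<in> C2" "y \<in> C1" for C1 C2 y
  proof -
    have "(x, y) \<in> E\<^sup>*" "(y, x) \<in> E\<^sup>*" using basin_conn that by blast+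
    then show ?thesis using that unfolding basins_def is_basin_def strongly_connected_component_def by blast
  qed
  then show ?thesis using assms by blast
qed

lemma basin_ne: "C \<in> Bs \<Longrightarrow> C \<noteq> {}"
  unfolding basins_def is_basin_def strongly_connected_component_def by auto

lemma w'_B: assumes "k \<in> B" shows "w' j k = 0"
proof -
  obtain C where C: "C \<in> Bs" "k \<in> C" using assms by blast
  have "j \<in> C" if "w j k \<noteq> 0"
  proof (cases "j = k")
    case False
    then have "(k, j) \<in> E" using that E_iff by blast
    then show ?thesis using basin_closed[OF C] by blast
  qed (use C in auto)
  then show ?thesis using C unfolding remove_basin_edges_def by (cases "w j k = 0") auto
qed

lemma w'_T: assumes "k \<notin> B" shows "w' j k = w j k"
  using assms unfolding remove_basin_edges_def by auto

lemma E'_T: assumes "k \<notin> B" shows "(k, j) \<in> E' \<longleftrightarrow> (k, j) \<in> E"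
  using w'_T[OF assms, of j] unfolding wedges_def by simp

lemma E'_B: assumes "k \<in> B" shows "(k, j) \<notin> E'"
  using w'_B[OF assms, of j] unfolding wedges_def by simp

lemma reach_basin: "\<exists>b\<in>B. (x, b) \<in> E\<^sup>*"
proof -
  define R where "R y = {z. (y, z) \<in> E\<^sup>*}" for y
  obtain z where z: "(x, z) \<in> E\<^sup>*" and zmin: "\<And>y. (x, y) \<in> E\<^sup>* \<Longrightarrow> card (R z) \<le> card (R y)"
    using ex_has_least_nat[of "\<lambda>z. (x, z) \<in> E\<^sup>*" x "\<lambda>y. card (R y)"] by auto
  have key: "R y = R z" if "y \<in> R z" for y
  proof -
    have "R y \<subseteq> R z" using that unfolding R_def by (auto intro: rtrancl_trans)
    moreover have "(x, y) \<in> E\<^sup>*" using z that unfolding R_def by (auto intro: rtrancl_trans)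
    then have "card (R z) \<le> card (R y)" by (rule zmin)
    moreover have "card (R y) \<le> card (R z)" using \<open>R y \<subseteq> R z\<close> by (simp add: card_mono)
    ultimately show ?thesis using card_subset_eq[of "R z" "R y"] by simp
  qed
  have zz: "z \<in> R z" unfolding R_def by simp
  have "is_basin E (R z)"
    unfolding is_basin_def strongly_connected_component_def
  proof (intro conjI ballI allI impI)
    show "R z \<noteq> {}" using zz by blast
  next
    fix a b assume "a \<in> R z" "b \<in> R z"
    then show "(a, b) \<in> E\<^sup>*" using key unfolding R_def by blast
  next
    fix a y assume "a \<in> R z" "(a, y) \<in> E\<^sup>* \<and> (y, a) \<in> E\<^sup>*"
    then show "y \<in> R z" using key unfolding R_def by blast
  next
    fix a y assume "a \<in> R z" "(a, y) \<in> E"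
    then show "y \<in> R z" using key unfolding R_def by blast
  qed
  then have Rz: "R z \<in> Bs" unfolding basins_def by blast
  have "z \<in> B" using Rz zz by blast
  then show ?thesis using z by (intro bexI[of _ z])
qed

lemma reach_B'_aux: "(x, b) \<in> E\<^sup>* \<Longrightarrow> b \<in> B \<Longrightarrow> \<exists>b'\<in>B. (x, b') \<in> E'\<^sup>*"
proof (induction rule: converse_rtrancl_induct)
  case base then show ?case by blast
next
  case (step x y)
  show ?case
  proof (cases "x \<in> B")
    case True
    have "(x, x) \<in> E'\<^sup>*" by (rule rtrancl_refl)
    then show ?thesis using True by (rule bexI)
  next
    case False
    then have "(x, y) \<in> E'" using E'_T[OF False, of y] step(1) by simp
    obtain b' where b': "b' \<in> B" "(y, b') \<in> E'\<^sup>*" using step(3)[OF step(4)] by (elim bexE)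
    have "(x, b') \<in> E'\<^sup>*" using converse_rtrancl_into_rtrancl[OF \<open>(x, y) \<in> E'\<close> b'(2)] .
    then show ?thesis using b'(1) by (rule bexI)
  qed
qed

lemma reach_B': "\<exists>b\<in>B. (x, b) \<in> E'\<^sup>*"
proof -
  obtain b where b: "b \<in> B" "(x, b) \<in> E\<^sup>*" using reach_basin[of x] by (elim bexE)
  show ?thesis using reach_B'_aux[OF b(2,1)] .
qed


lemma w'_real: assumes "j \<noteq> k" shows "w' j k = of_real (if k \<in> B then 0 else r j k)"
proof (cases "k \<in> B")
  case True then show ?thesis using w'_B[OF True, of j] by simp
next
  case False then show ?thesis using w'_T[OF False, of j] wr[OF assms] by simp
qed

definition rr :: "'n \<Rightarrow> 'n \<Rightarrow> real" where "rr j k = (if k \<in> B then 0 else r j k)"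

lemma rr_nn: "j \<noteq> k \<Longrightarrow> rr j k \<ge> 0" unfolding rr_def using rnn by simp

lemma E'_iff: "(k, j) \<in> E' \<longleftrightarrow> j \<noteq> k \<and> rr j k \<noteq> 0"
proof -
  have "(k, j) \<in> E' \<longleftrightarrow> j \<noteq> k \<and> w' j k \<noteq> 0" unfolding wedges_def by simp
  moreover have "j \<noteq> k \<Longrightarrow> w' j k = of_real (rr j k)" using w'_real[of j k] unfolding rr_def by simp
  ultimately show ?thesis by auto
qed

lemma W_real: assumes "F \<subseteq> E'"
  shows "forest_weight w' F = of_real (\<Prod>(k, j)\<in>F. rr j k)"
proof -
  have "forest_weight w' F = (\<Prod>e\<in>F. of_real (rr (snd e) (fst e)))"
    unfolding forest_weight_def
  proof (rule prod.cong[OF refl])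
    fix e assume "e \<in> F"
    then have "snd e \<noteq> fst e" using assms unfolding wedges_def by auto
    then show "(case e of (k, j) \<Rightarrow> w' j k) = of_real (rr (snd e) (fst e))"
      using w'_real unfolding rr_def by (simp add: case_prod_beta)
  qed
  also have "\<dots> = of_real (\<Prod>(k, j)\<in>F. rr j k)" by (simp add: case_prod_beta)
  finally show ?thesis .
qed

lemma W_nn: assumes "F \<subseteq> E'" shows "(\<Prod>(k, j)\<in>F. rr j k) \<ge> 0"
proof -
  have "rr (snd e) (fst e) \<ge> 0" if "e \<in> F" for e
  proof -
    have "(fst e, snd e) \<in> E'" using that assms by auto
    then have "snd e \<noteq> fst e" using E'_iff by blast
    then show ?thesis using rr_nn[of "snd e" "fst e"] by linarith
  qed
  then show ?thesis by (simp add: case_prod_beta prod_nonneg)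
qed

lemma W_pos: assumes "F \<subseteq> E'" shows "(\<Prod>(k, j)\<in>F. rr j k) > 0"
proof -
  have "rr (snd e) (fst e) > 0" if "e \<in> F" for e
  proof -
    have "(fst e, snd e) \<in> E'" using that assms by auto
    then have "snd e \<noteq> fst e" "rr (snd e) (fst e) \<noteq> 0" using E'_iff by blast+
    then show ?thesis using rr_nn[of "snd e" "fst e"] by linarith
  qed
  then show ?thesis by (simp add: case_prod_beta prod_pos)
qed

lemma cross_edge: "(z, b) \<in> R\<^sup>* \<Longrightarrow> z \<notin> U \<Longrightarrow> b \<in> U \<Longrightarrow> \<exists>x y. x \<notin> U \<and> y \<in> U \<and> (x, y) \<in> R"
  by (induction rule: converse_rtrancl_induct) auto

definition finv :: "'n set \<Rightarrow> ('n \<times> 'n) set \<Rightarrow> bool" where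
  "finv U F \<longleftrightarrow> B \<subseteq> U \<and> F \<subseteq> E' \<and> acyclic F \<and> (\<forall>x y. (x, y) \<in> F \<longrightarrow> x \<in> U - B \<and> y \<in> U)
     \<and> (\<forall>x\<in>U - B. \<exists>!y. (x, y) \<in> F)"

lemma inv_extend: "finv U F \<Longrightarrow> \<exists>F'. finv UNIV F'"
proof (induction "card (- U)" arbitrary: U F rule: less_induct)
  case less
  show ?case
  proof (cases "U = UNIV")
    case True then show ?thesis using less.prems by blast
  next
    case False
    then obtain z where z: "z \<notin> U" by blast
    obtain b where b: "b \<in> B" "(z, b) \<in> E'\<^sup>*" using reach_B'[of z] by (elim bexE)
    have BU: "B \<subseteq> U" using less.prems unfolding finv_def by blast
    obtain x y where xy: "x \<notin> U" "y \<in> U" "(x, y) \<in> E'"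
      using cross_edge[OF b(2) z] b(1) BU by blast
    have FE: "F \<subseteq> E'" and ac: "acyclic F" and ed: "\<forall>x y. (x, y) \<in> F \<longrightarrow> x \<in> U - B \<and> y \<in> U"
      and un: "\<forall>x\<in>U - B. \<exists>!y. (x, y) \<in> F" using less.prems unfolding finv_def by blast+
    have yx: "(y, x) \<notin> F\<^sup>*"
    proof
      assume "(y, x) \<in> F\<^sup>*"
      then show False
      proof (cases rule: rtranclE)
        case base then show False using xy by blast
      next
        case (step u) then show False using ed xy by blast
      qed
    qed
    have "finv (insert x U) (insert (x, y) F)"
      unfolding finv_def
    proof (intro conjI)
      show "B \<subseteq> insert x U" using BU by blast
      show "insert (x, y) F \<subseteq> E'" using FE xy by blast
      show "acyclic (insert (x, y) F)" unfolding acyclic_insert using ac yx by blast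
      show "\<forall>a c. (a, c) \<in> insert (x, y) F \<longrightarrow> a \<in> insert x U - B \<and> c \<in> insert x U"
        using ed xy BU by blast
      show "\<forall>a\<in>insert x U - B. \<exists>!c. (a, c) \<in> insert (x, y) F"
      proof
        fix a assume a: "a \<in> insert x U - B"
        show "\<exists>!c. (a, c) \<in> insert (x, y) F"
        proof (cases "a = x")
          case True
          have "\<forall>c. (x, c) \<notin> F" using ed xy by blast
          then show ?thesis using True by blast
        next
          case False
          then have "\<exists>!c. (a, c) \<in> F" using un a by blast
          then show ?thesis using False by blast
        qed
      qed
    qed
    moreover have "card (- insert x U) < card (- U)"
      using xy(1) by (metis Compl_iff card_Diff1_less compl_le_swap2 finite subset_insertI Diff_eq insert_is_Un Compl_eq_Diff_UNIV compl_sup inf_commute)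
    ultimately show ?thesis using less.hyps by blast
  qed
qed

lemma forest_exists: "\<exists>F\<in>spanning_forests E' B. (\<Prod>(k, j)\<in>F. rr j k) > 0"
proof -
  have "finv B {}" unfolding finv_def by (auto simp: acyclic_def)
  then obtain F where F: "finv UNIV F" using inv_extend by blast
  note Fd = F[unfolded finv_def, THEN conjunct2]
  note FE = Fd[THEN conjunct1] and ac = Fd[THEN conjunct2, THEN conjunct1]
    and ed = Fd[THEN conjunct2, THEN conjunct2, THEN conjunct1]
    and un = Fd[THEN conjunct2, THEN conjunct2, THEN conjunct2]
  have r1: "\<forall>x\<in>B. \<forall>y. (x, y) \<notin> F" using ed by blast
  have r2: "\<forall>x. x \<notin> B \<longrightarrow> (\<exists>!y. (x, y) \<in> F)"
  proof (intro allI impI)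
    fix x assume "x \<notin> B"
    then have "x \<in> UNIV - B" by (rule DiffI[OF UNIV_I])
    then show "\<exists>!y. (x, y) \<in> F" by (rule bspec[OF un])
  qed
  have "F \<in> spanning_forests E' B" unfolding spanning_forests_def using FE ac r1 r2 by (intro CollectI conjI)
  then show ?thesis using W_pos[OF FE] by (rule bexI[rotated])
qed

definition Z :: complex where "Z = (\<Sum>F\<in>spanning_forests E' B. forest_weight w' F)"

lemma Z_nz: "Z \<noteq> 0"
proof -
  let ?p = "\<lambda>F. (\<Prod>(k, j)\<in>F. rr j k)"
  have sub: "F \<subseteq> E'" if "F \<in> spanning_forests E' B" for F using that unfolding spanning_forests_def by blast
  have "Z = of_real (\<Sum>F\<in>spanning_forests E' B. ?p F)"
    unfolding Z_def of_real_sum by (rule sum.cong[OF refl]) (simp add: W_real sub)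
  moreover obtain F0 where F0: "F0 \<in> spanning_forests E' B" "?p F0 > 0" using forest_exists by blast
  have "(\<Sum>F\<in>spanning_forests E' B. ?p F) > 0"
    by (rule sum_pos2[of "spanning_forests E' B" F0]) (use F0 W_nn sub in auto)
  ultimately show ?thesis by (metis of_real_eq_0_iff less_irrefl)
qed

end




lemma harm_combine:
  fixes W :: "'g \<Rightarrow> complex" and c :: "'n \<Rightarrow> complex" and \<psi> :: "'g \<Rightarrow> 'n \<Rightarrow> 'n \<Rightarrow> complex"
  assumes fin: "finite S" "finite G" "\<And>g. finite (RB g)"
    and inner: "\<And>g. g \<in> G \<Longrightarrow> (\<Sum>j\<in>S. c j * (\<Sum>j'\<in>RB g. c j' * (\<psi> g j j' - \<psi> g k j'))) = 0"
    and A: "\<And>i. A i = (\<Sum>g\<in>G. W g * (\<Sum>j'\<in>RB g. c j' * \<psi> g i j'))"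
  shows "(\<Sum>j\<in>S. c j * (A j - A k)) = 0"
proof -
  have "(\<Sum>j\<in>S. c j * (A j - A k)) = (\<Sum>j\<in>S. \<Sum>g\<in>G. W g * (c j * (\<Sum>j'\<in>RB g. c j' * (\<psi> g j j' - \<psi> g k j'))))"
  proof (rule sum.cong[OF refl])
    fix j
    show "c j * (A j - A k) = (\<Sum>g\<in>G. W g * (c j * (\<Sum>j'\<in>RB g. c j' * (\<psi> g j j' - \<psi> g k j'))))"
      unfolding A by (simp add: sum_subtractf[symmetric] right_diff_distrib sum_distrib_left algebra_simps)
  qed
  also have "\<dots> = (\<Sum>g\<in>G. W g * (\<Sum>j\<in>S. c j * (\<Sum>j'\<in>RB g. c j' * (\<psi> g j j' - \<psi> g k j'))))"
    by (subst sum.swap) (simp add: sum_distrib_left)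
  also have "\<dots> = 0" using inner by simp
  finally show ?thesis .
qed

context wg begin

definition a :: "'n set \<Rightarrow> 'n \<Rightarrow> complex" where
  "a N i = (\<Sum>F\<in>spanning_forests E' B. forest_weight w' F * (if \<exists>r\<in>N. (i, r) \<in> F\<^sup>* then 1 else 0))"

lemma a_B: assumes "i \<in> B" shows "a N i = (if i \<in> N then Z else 0)"
proof -
  have "(\<exists>r\<in>N. (i, r) \<in> F\<^sup>*) \<longleftrightarrow> i \<in> N" if "F \<in> spanning_forests E' B" for F
  proof
    assume "\<exists>r\<in>N. (i, r) \<in> F\<^sup>*"
    then obtain r where "r \<in> N" "(i, r) \<in> F\<^sup>*" by (elim bexE)
    moreover have "r = i" using sf_root_rtrancl[OF that assms \<open>(i, r) \<in> F\<^sup>*\<close>] .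
    ultimately show "i \<in> N" by simp
  next
    assume "i \<in> N" then show "\<exists>r\<in>N. (i, r) \<in> F\<^sup>*" by (intro bexI[of _ i]) simp_all
  qed
  then show ?thesis unfolding a_def Z_def by (cases "i \<in> N") (simp_all cong: sum.cong)
qed

lemma a_harm_T:
  assumes N: "N \<subseteq> B" and k: "k \<notin> B"
  shows "(\<Sum>j\<in>UNIV - {k}. w j k * (a N j - a N k)) = 0"
proof -
  let ?G = "spanning_forests E' (insert k B)"
  define RB where "RB g = {j. \<exists>r\<in>B. (j, r) \<in> g\<^sup>*}" for g
  define \<phi> where "\<phi> g j = (if \<exists>r\<in>N. (j, r) \<in> g\<^sup>* then 1 else (0::complex))" for g j
  define \<psi> where "\<psi> g i j' = (if i \<in> RB g then \<phi> g i else \<phi> g j')" for g i j'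
  have kRB: "k \<notin> RB g" if "g \<in> ?G" for g
  proof
    assume "k \<in> RB g"
    then obtain r where "r \<in> B" "(k, r) \<in> g\<^sup>*" unfolding RB_def by blast
    moreover have "r = k" using sf_root_rtrancl[OF that _ \<open>(k, r) \<in> g\<^sup>*\<close>] by simp
    ultimately show False using k by simp
  qed
  have A: "a N i = (\<Sum>g\<in>?G. forest_weight w' g * (\<Sum>j'\<in>RB g. w j' k * \<psi> g i j'))" for i
  proof -
    have "a N i = (\<Sum>g\<in>?G. \<Sum>j'\<in>{j. (k, j) \<in> E' \<and> (\<exists>r\<in>B. (j, r) \<in> g\<^sup>*)}.
        forest_weight w' (insert (k, j') g) * (if \<exists>r\<in>N. (i, r) \<in> (insert (k, j') g)\<^sup>* then 1 else 0))"
      unfolding a_def by (rule sf_sum_split[OF k])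
    also have "\<dots> = (\<Sum>g\<in>?G. forest_weight w' g * (\<Sum>j'\<in>RB g. w j' k * \<psi> g i j'))"
    proof (rule sum.cong[OF refl])
      fix g assume g: "g \<in> ?G"
      have nk: "(k, j') \<notin> g" for j' using g unfolding spanning_forests_def by blast
      have "(\<Sum>j'\<in>{j. (k, j) \<in> E' \<and> (\<exists>r\<in>B. (j, r) \<in> g\<^sup>*)}.
        forest_weight w' (insert (k, j') g) * (if \<exists>r\<in>N. (i, r) \<in> (insert (k, j') g)\<^sup>* then 1 else 0))
        = (\<Sum>j'\<in>{j. (k, j) \<in> E' \<and> (\<exists>r\<in>B. (j, r) \<in> g\<^sup>*)}. forest_weight w' g * (w j' k * \<psi> g i j'))"
      proof (rule sum.cong[OF refl])
        fix j' assume j': "j' \<in> {j. (k, j) \<in> E' \<and> (\<exists>r\<in>B. (j, r) \<in> g\<^sup>*)}"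
        have "forest_weight w' (insert (k, j') g) = w' j' k * forest_weight w' g"
          unfolding forest_weight_def using nk[of j'] by (simp add: prod.insert)
        moreover have "w' j' k = w j' k" using w'_T[OF k] .
        moreover have "(if \<exists>r\<in>N. (i, r) \<in> (insert (k, j') g)\<^sup>* then 1 else 0) = \<psi> g i j'"
          unfolding \<psi>_def \<phi>_def RB_def using sf_insert_reach[OF k g N, of i j'] by simp
        ultimately show "forest_weight w' (insert (k, j') g) * (if \<exists>r\<in>N. (i, r) \<in> (insert (k, j') g)\<^sup>* then 1 else 0)
          = forest_weight w' g * (w j' k * \<psi> g i j')" by simp
      qed
      also have "\<dots> = forest_weight w' g * (\<Sum>j'\<in>RB g. w j' k * \<psi> g i j')"
        unfolding sum_distrib_left[symmetric]
      proof (rule arg_cong[where f = "\<lambda>x. forest_weight w' g * x"], rule sum.mono_neutral_left)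
        show "{j. (k, j) \<in> E' \<and> (\<exists>r\<in>B. (j, r) \<in> g\<^sup>*)} \<subseteq> RB g" unfolding RB_def by blast
        show "\<forall>j'\<in>RB g - {j. (k, j) \<in> E' \<and> (\<exists>r\<in>B. (j, r) \<in> g\<^sup>*)}. w j' k * \<psi> g i j' = 0"
        proof
          fix j' assume j': "j' \<in> RB g - {j. (k, j) \<in> E' \<and> (\<exists>r\<in>B. (j, r) \<in> g\<^sup>*)}"
          then have "(k, j') \<notin> E'" unfolding RB_def by blast
          then have "(k, j') \<notin> E" using E'_T[OF k] by simp
          moreover have "j' \<noteq> k" using j' kRB[OF g] by blast
          ultimately have "w j' k = 0" using E_iff by blast
          then show "w j' k * \<psi> g i j' = 0" by simp
        qed
      qed simp
      finally show "(\<Sum>j'\<in>{j. (k, j) \<in> E' \<and> (\<exists>r\<in>B. (j, r) \<in> g\<^sup>*)}.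
        forest_weight w' (insert (k, j') g) * (if \<exists>r\<in>N. (i, r) \<in> (insert (k, j') g)\<^sup>* then 1 else 0))
        = forest_weight w' g * (\<Sum>j'\<in>RB g. w j' k * \<psi> g i j')" .
    qed
    finally show ?thesis .
  qed
  show ?thesis
  proof (rule harm_combine[where A = "a N" and \<psi> = \<psi> and RB = RB and G = ?G, OF _ _ _ _ A])
    fix g assume g: "g \<in> ?G"
    have "\<psi> g k j' = \<phi> g j'" for j' unfolding \<psi>_def using kRB[OF g] by simp
    then show "(\<Sum>j\<in>UNIV - {k}. w j k * (\<Sum>j'\<in>RB g. w j' k * (\<psi> g j j' - \<psi> g k j'))) = 0"
      unfolding \<psi>_def using harm_alg[OF kRB[OF g], of "\<lambda>j. w j k" "\<phi> g"] by simp
  qed simp_all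
qed

lemma a_harm_B:
  assumes N: "N \<in> Bs" and k: "k \<in> B"
  shows "(\<Sum>j\<in>UNIV - {k}. w j k * (a N j - a N k)) = 0"
proof (rule sum.neutral, rule ballI)
  fix j assume j: "j \<in> UNIV - {k}"
  obtain C where C: "C \<in> Bs" "k \<in> C" using k by (elim UnionE)
  show "w j k * (a N j - a N k) = 0"
  proof (cases "w j k = 0")
    case False
    then have "(k, j) \<in> E" using j E_iff by blast
    then have jC: "j \<in> C" using basin_closed[OF C] by blast
    then have jB: "j \<in> B" using C by blast
    have "j \<in> N \<longleftrightarrow> k \<in> N"
    proof
      assume "j \<in> N" then have "N = C" using basin_disj[OF N C(1) _ jC] by blast
      then show "k \<in> N" using C by simp
    next
      assume "k \<in> N" then have "N = C" using basin_disj[OF N C(1) _ C(2)] by blast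
      then show "j \<in> N" using jC by simp
    qed
    then have "a N j = a N k" using a_B[OF jB] a_B[OF k] by simp
    then show ?thesis by simp
  qed simp
qed

end




context wg begin

definition harmr :: "('n \<Rightarrow> real) \<Rightarrow> 'n \<Rightarrow> bool" where
  "harmr u k \<longleftrightarrow> (\<Sum>j\<in>UNIV - {k}. r j k * (u j - u k)) = 0"

definition harmc :: "('n \<Rightarrow> complex) \<Rightarrow> 'n \<Rightarrow> bool" where
  "harmc x k \<longleftrightarrow> (\<Sum>j\<in>UNIV - {k}. w j k * (x j - x k)) = 0"

lemma harmc_Re: assumes "harmc x k" shows "harmr (\<lambda>j. Re (x j)) k"
proof -
  have "(\<Sum>j\<in>UNIV - {k}. w j k * (x j - x k)) = (\<Sum>j\<in>UNIV - {k}. of_real (r j k) * (x j - x k))"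
    using wr by (intro sum.cong) auto
  then have "Re (\<Sum>j\<in>UNIV - {k}. of_real (r j k) * (x j - x k)) = 0" using assms unfolding harmc_def by simp
  then show ?thesis unfolding harmr_def by (simp add: Re_sum)
qed

lemma harmc_Im: assumes "harmc x k" shows "harmr (\<lambda>j. Im (x j)) k"
proof -
  have "(\<Sum>j\<in>UNIV - {k}. w j k * (x j - x k)) = (\<Sum>j\<in>UNIV - {k}. of_real (r j k) * (x j - x k))"
    using wr by (intro sum.cong) auto
  then have "Im (\<Sum>j\<in>UNIV - {k}. of_real (r j k) * (x j - x k)) = 0" using assms unfolding harmc_def by simp
  then show ?thesis unfolding harmr_def by (simp add: Im_sum)
qed

lemma harmr_neg: "harmr u k \<Longrightarrow> harmr (\<lambda>j. - u j) k"
  unfolding harmr_def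
proof -
  assume "(\<Sum>j\<in>UNIV - {k}. r j k * (u j - u k)) = 0"
  moreover have "(\<Sum>j\<in>UNIV - {k}. r j k * (- u j - - u k)) = - (\<Sum>j\<in>UNIV - {k}. r j k * (u j - u k))"
    unfolding sum_negf[symmetric] by (rule sum.cong) (auto simp: algebra_simps)
  ultimately show "(\<Sum>j\<in>UNIV - {k}. r j k * (- u j - - u k)) = 0" by simp
qed

lemma max_step:
  assumes h: "harmr u y" and cl: "\<forall>j. (y, j) \<in> E \<longrightarrow> u j \<le> M" and uy: "u y = M" and e: "(y, z) \<in> E"
  shows "u z = M"
proof -
  have t: "r j y * (M - u j) \<ge> 0" if "j \<in> UNIV - {y}" for j
  proof (cases "r j y = 0")
    case False
    then have "w j y \<noteq> 0" using wr[of j y] that by auto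
    then have "(y, j) \<in> E" using E_iff that by blast
    then have "u j \<le> M" using cl by blast
    then show ?thesis using rnn[of j y] that by simp
  qed simp
  have "(\<Sum>j\<in>UNIV - {y}. r j y * (M - u j)) = - (\<Sum>j\<in>UNIV - {y}. r j y * (u j - u y))"
    unfolding sum_negf[symmetric] by (rule sum.cong) (auto simp: uy algebra_simps)
  then have "(\<Sum>j\<in>UNIV - {y}. r j y * (M - u j)) = 0"
    using h unfolding harmr_def by simp
  moreover have "(\<Sum>j\<in>UNIV - {y}. r j y * (M - u j)) = 0 \<longleftrightarrow> (\<forall>j\<in>UNIV - {y}. r j y * (M - u j) = 0)"
    by (rule sum_nonneg_eq_0_iff) (simp_all add: t)
  ultimately have all0: "\<forall>j\<in>UNIV - {y}. r j y * (M - u j) = 0" by simp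
  have "z \<noteq> y \<and> w z y \<noteq> 0" using E_iff[of y z] e by simp
  then have zy: "z \<noteq> y" and "r z y \<noteq> 0" using wr[of z y] by auto
  then show ?thesis using all0 zy by auto
qed

lemma max_prop:
  assumes h: "\<forall>k\<in>S. harmr u k" and cl: "\<forall>x\<in>S. \<forall>y. (x, y) \<in> E \<longrightarrow> y \<in> S"
    and bd: "\<forall>s\<in>S. u s \<le> M" and v: "v \<in> S" "u v = M" and p: "(v, z) \<in> E\<^sup>*"
  shows "u z = M \<and> z \<in> S"
  using p
proof (induction rule: rtrancl_induct)
  case base then show ?case using v by simp
next
  case (step y z)
  then have yS: "y \<in> S" and uy: "u y = M" by auto
  have "z \<in> S" using cl yS step(2) by blast
  moreover have "u z = M"
  proof (rule max_step[of u y M z])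
    show "harmr u y" using h yS by blast
    show "\<forall>j. (y, j) \<in> E \<longrightarrow> u j \<le> M" using cl bd yS by blast
    show "u y = M" by (rule uy)
    show "(y, z) \<in> E" by (rule step(2))
  qed
  ultimately show ?case by simp
qed

lemma harmr_const:
  assumes C: "C \<in> Bs" and h: "\<forall>k\<in>C. harmr u k" and y: "y \<in> C" and z: "z \<in> C"
  shows "u y = u z"
proof -
  have fin: "finite (u ` C)" by simp
  have ne: "u ` C \<noteq> {}" using y by blast
  obtain v where v: "v \<in> C" "u v = Max (u ` C)" using Max_in[OF fin ne] by auto
  have bd: "\<forall>s\<in>C. u s \<le> Max (u ` C)" using fin by simp
  have cl: "\<forall>x\<in>C. \<forall>y. (x, y) \<in> E \<longrightarrow> y \<in> C" using basin_closed[OF C] by blast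
  have "u y = Max (u ` C)" using max_prop[OF h cl bd v basin_conn[OF C v(1) y]] by blast
  moreover have "u z = Max (u ` C)" using max_prop[OF h cl bd v basin_conn[OF C v(1) z]] by blast
  ultimately show ?thesis by simp
qed

lemma harmr_le0:
  assumes h: "\<forall>k. harmr u k" and b: "\<forall>b\<in>B. u b = 0"
  shows "u z \<le> 0"
proof -
  have fin: "finite (range u)" by simp
  obtain v where v: "u v = Max (range u)" using Max_in[OF fin] by (metis UNIV_not_empty empty_is_image imageE)
  have bd: "\<forall>s\<in>UNIV. u s \<le> Max (range u)" using fin by simp
  obtain b where bB: "b \<in> B" "(v, b) \<in> E\<^sup>*" using reach_basin[of v] by (elim bexE)
  have "u b = Max (range u)" using max_prop[of UNIV u _ v b] h bd v bB(2) by blast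
  then have "Max (range u) = 0" using bspec[OF b bB(1)] by simp
  then show ?thesis using bd by simp
qed

lemma harmr_zero:
  assumes h: "\<forall>k. harmr u k" and b: "\<forall>b\<in>B. u b = 0"
  shows "u z = 0"
proof -
  have "u z \<le> 0" using harmr_le0[OF h b] .
  moreover have "- u z \<le> 0"
  proof (rule harmr_le0[of "\<lambda>j. - u j"])
    show "\<forall>k. harmr (\<lambda>j. - u j) k" using harmr_neg h by blast
    show "\<forall>b\<in>B. - u b = 0" using b by (simp only: neg_equal_0_iff_equal)
  qed
  ultimately show ?thesis by simp
qed

lemma harmc_zero:
  assumes h: "\<forall>k. harmc x k" and b: "\<forall>b\<in>B. x b = 0"
  shows "x z = 0"
proof -
  have "Re (x z) = 0" using harmr_zero[of "\<lambda>j. Re (x j)"] harmc_Re h b by simp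
  moreover have "Im (x z) = 0" using harmr_zero[of "\<lambda>j. Im (x j)"] harmc_Im h b by simp
  ultimately show ?thesis by (simp add: complex_eq_iff)
qed

lemma harmc_const:
  assumes C: "C \<in> Bs" and h: "\<forall>k. harmc x k" and y: "y \<in> C" and z: "z \<in> C"
  shows "x y = x z"
proof -
  have "Re (x y) = Re (x z)" using harmr_const[OF C _ y z, of "\<lambda>j. Re (x j)"] harmc_Re h by simp
  moreover have "Im (x y) = Im (x z)" using harmr_const[OF C _ y z, of "\<lambda>j. Im (x j)"] harmc_Im h by simp
  ultimately show ?thesis by (simp add: complex_eq_iff)
qed

lemma a_harmc: assumes "N \<in> Bs" shows "harmc (a N) k"
proof (cases "k \<in> B")
  case True then show ?thesis unfolding harmc_def using a_harm_B[OF assms] by simp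
next
  case False
  have "N \<subseteq> B" using assms by blast
  then show ?thesis unfolding harmc_def using a_harm_T False by simp
qed

end




lemma cnj_transpose_mult: "cnj_transpose (A ** B) = cnj_transpose B ** cnj_transpose A"
  unfolding cnj_transpose_def by (simp add: vec_eq_iff matrix_matrix_mult_def cnj_sum mult.commute)

lemma trace_AAH: "trace (A ** cnj_transpose A) = of_real (\<Sum>i\<in>UNIV. \<Sum>i'\<in>UNIV. (cmod (A $ i $ i'))^2)"
  unfolding trace_def cnj_transpose_def of_real_sum complex_norm_square
  by (simp add: matrix_matrix_mult_def)

lemma trace_proj:
  fixes P Q A :: "complex^'n^'n"
  assumes PP: "P ** P = P" and Ph: "cnj_transpose P = P" and QQ: "Q ** Q = Q" and Qh: "cnj_transpose Q = Q"
  shows "trace (P ** A ** Q ** cnj_transpose A) = trace ((P ** A ** Q) ** cnj_transpose (P ** A ** Q))"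
proof -
  have PPX: "P ** (P ** X) = P ** X" for X by (metis matrix_mul_assoc PP)
  have QQX: "Q ** (Q ** X) = Q ** X" for X by (metis matrix_mul_assoc QQ)
  have cM: "cnj_transpose (P ** A ** Q) = Q ** (cnj_transpose A ** P)"
    by (simp add: cnj_transpose_mult Ph Qh)
  have "trace ((P ** A ** Q) ** cnj_transpose (P ** A ** Q)) = trace (P ** (A ** (Q ** (cnj_transpose A ** P))))"
    unfolding cM by (simp add: matrix_mul_assoc[symmetric] QQX)
  also have "\<dots> = trace ((P ** (A ** (Q ** cnj_transpose A))) ** P)"
    by (simp add: matrix_mul_assoc[symmetric])
  also have "\<dots> = trace (P ** (P ** (A ** (Q ** cnj_transpose A))))" by (rule trace_mul_sym)
  also have "\<dots> = trace (P ** A ** Q ** cnj_transpose A)" by (simp add: PPX matrix_mul_assoc[symmetric])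
  finally show ?thesis by simp
qed

lemma Omega_comp:
  fixes w :: "'n::finite \<Rightarrow> 'n \<Rightarrow> complex"
  assumes "\<Omega> = (\<chi> j k. if j = k then - (\<Sum>l\<in>UNIV - {k}. w l k) else w j k)"
  shows "(transpose \<Omega> *v x) $ k = (\<Sum>j\<in>UNIV - {k}. w j k * (x $ j - x $ k))"
proof -
  have "(transpose \<Omega> *v x) $ k = (\<Sum>j\<in>UNIV. (if j = k then - (\<Sum>l\<in>UNIV - {k}. w l k) else w j k) * x $ j)"
    unfolding assms by (simp add: matrix_vector_mult_def transpose_def)
  also have "\<dots> = - (\<Sum>l\<in>UNIV - {k}. w l k) * x $ k + (\<Sum>j\<in>UNIV - {k}. w j k * x $ j)"
    by (subst sum.remove[of UNIV k]) (auto intro!: sum.cong)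
  also have "\<dots> = (\<Sum>j\<in>UNIV - {k}. w j k * (x $ j - x $ k))"
    by (simp add: right_diff_distrib sum_subtractf sum_distrib_right)
  finally show ?thesis .
qed

context wg begin

lemma sum_basin_delta:
  assumes C0: "C0 \<in> Bs" "i \<in> C0"
  shows "(\<Sum>C\<in>Bs. f C * (if i \<in> C then Z else 0)) = f C0 * Z"
proof -
  have "(\<Sum>C\<in>Bs. f C * (if i \<in> C then Z else 0)) = (\<Sum>C\<in>Bs. if C = C0 then f C * Z else 0)"
  proof (rule sum.cong[OF refl])
    fix C assume C: "C \<in> Bs"
    have "i \<in> C \<longleftrightarrow> C = C0" using basin_disj[OF C C0(1) _ C0(2)] C0(2) by blast
    then show "f C * (if i \<in> C then Z else 0) = (if C = C0 then f C * Z else 0)" by simp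
  qed
  also have "\<dots> = f C0 * Z" using C0(1) by (simp add: sum.delta)
  finally show ?thesis .
qed

end


theorem mainTheorem5:
  fixes L :: "nat \<Rightarrow> complex^'n^'n" and N :: nat
    and \<pi> :: "'n \<Rightarrow> complex^'n^'n"
    and w :: "'n \<Rightarrow> 'n \<Rightarrow> complex" and \<Omega> :: "complex^'n^'n"
    and \<kappa> :: "'n set \<Rightarrow> complex^'n"
  assumes proj: "\<And>j. rank_one_orth_proj (\<pi> j)"
    and orth: "\<And>j k. j \<noteq> k \<Longrightarrow> \<pi> j ** \<pi> k = 0"
    and w_def: "\<And>j k. j \<noteq> k \<Longrightarrow> w j k = (\<Sum>\<alpha><N. trace (\<pi> j ** L \<alpha> ** \<pi> k ** cnj_transpose (L \<alpha>)))"
    and Omega_def: "\<Omega> = (\<chi> j k. if j = k then - (\<Sum>l\<in>UNIV - {k}. w l k) else w j k)"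
    and kappa_def: "\<And>Neta. \<kappa> Neta =
      (\<Sum>\<tau>\<in>spanning_forests (wedges (remove_basin_edges w)) (\<Union>(basins (wedges w))).
          forest_weight (remove_basin_edges w) \<tau>) *s (\<Sum>j\<in>Neta. axis j 1)
      + (\<Sum>l\<in>UNIV - \<Union>(basins (wedges w)).
          (\<Sum>\<tau>\<in>spanning_forests_to (wedges (remove_basin_edges w)) (\<Union>(basins (wedges w))) Neta l.
              forest_weight (remove_basin_edges w) \<tau>) *s axis l 1)"
  shows "{x. transpose \<Omega> *v x = 0} = vec.span (\<kappa> ` basins (wedges w))
         \<and> vec.independent (\<kappa> ` basins (wedges w))
         \<and> inj_on \<kappa> (basins (wedges w))"
proof -
  define r where "r j k = (\<Sum>\<alpha><N. \<Sum>i\<in>UNIV. \<Sum>i'\<in>UNIV. (cmod ((\<pi> j ** L \<alpha> ** \<pi> k) $ i $ i'))^2)" for j k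
  have wr: "w j k = of_real (r j k)" if "j \<noteq> k" for j k
  proof -
    have pj: "\<pi> j ** \<pi> j = \<pi> j" "cnj_transpose (\<pi> j) = \<pi> j"
      and pk: "\<pi> k ** \<pi> k = \<pi> k" "cnj_transpose (\<pi> k) = \<pi> k"
      using proj unfolding rank_one_orth_proj_def by blast+
    have "w j k = (\<Sum>\<alpha><N. trace ((\<pi> j ** L \<alpha> ** \<pi> k) ** cnj_transpose (\<pi> j ** L \<alpha> ** \<pi> k)))"
      unfolding w_def[OF that] using trace_proj[OF pj pk] by simp
    also have "\<dots> = of_real (r j k)" unfolding r_def trace_AAH of_real_sum ..
    finally show ?thesis .
  qed
  have rnn: "r j k \<ge> 0" for j k unfolding r_def by (intro sum_nonneg) simp
  interpret G: wg w r by unfold_locales (rule wr, assumption, rule rnn)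
  let ?Bs = "basins (wedges w)"
  let ?B = "\<Union>(basins (wedges w))"
  have kap: "\<kappa> C $ i = G.a C i" if C: "C \<in> ?Bs" for C i
  proof -
    have CB: "C \<subseteq> ?B" using C by (rule Union_upper)
    have s1: "(\<Sum>j\<in>C. axis j (1::complex)) $ i = (if i \<in> C then 1 else 0)"
      by (simp add: sum_component axis_def)
    have s2: "(\<Sum>l\<in>UNIV - ?B. (\<Sum>\<tau>\<in>spanning_forests_to (wedges (remove_basin_edges w)) ?B C l.
              forest_weight (remove_basin_edges w) \<tau>) *s axis l (1::complex)) $ i
       = (if i \<in> ?B then 0 else (\<Sum>\<tau>\<in>spanning_forests_to (wedges (remove_basin_edges w)) ?B C i.
              forest_weight (remove_basin_edges w) \<tau>))" (is "?l = ?r")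
    proof -
      let ?f = "\<lambda>l. (\<Sum>\<tau>\<in>spanning_forests_to (wedges (remove_basin_edges w)) ?B C l.
              forest_weight (remove_basin_edges w) \<tau>)"
      have "?l = (\<Sum>l\<in>UNIV - ?B. ?f l * (axis l (1::complex) $ i))"
        unfolding sum_component vector_smult_component ..
      also have "\<dots> = (\<Sum>l\<in>UNIV - ?B. if i = l then ?f l else 0)"
        by (rule sum.cong[OF refl]) (simp add: axis_def)
      also have "\<dots> = (if i \<in> UNIV - ?B then ?f i else 0)" by (rule sum.delta') simp
      also have "\<dots> = ?r" by simp
      finally show ?thesis .
    qed
    show ?thesis
    proof (cases "i \<in> ?B")
      case True
      then show ?thesis unfolding kappa_def vector_add_component vector_smult_component s1 s2 G.a_B[OF True]
        G.Z_def by simp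
    next
      case False
      then have iC: "i \<notin> C" using CB by blast
      have "(\<Sum>\<tau>\<in>spanning_forests_to (wedges (remove_basin_edges w)) ?B C i. forest_weight (remove_basin_edges w) \<tau>)
          = G.a C i"
        unfolding G.a_def spanning_forests_to_def
        by (simp add: sum.inter_filter[symmetric] if_distrib cong: if_cong)
      then show ?thesis unfolding kappa_def vector_add_component vector_smult_component s1 s2
        using False iC by simp
    qed
  qed
  have kerc: "transpose \<Omega> *v x = 0 \<longleftrightarrow> (\<forall>k. G.harmc (\<lambda>j. x $ j) k)" for x
    unfolding G.harmc_def vec_eq_iff Omega_comp[OF Omega_def] by simp
  have kin: "transpose \<Omega> *v \<kappa> C = 0" if C: "C \<in> ?Bs" for C
  proof -
    have "(\<lambda>j. \<kappa> C $ j) = G.a C" using kap[OF C] by (simp add: fun_eq_iff)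
    then show ?thesis unfolding kerc using G.a_harmc[OF C] by auto
  qed
  define c where "c C = (SOME z. z \<in> C)" for C :: "'n set"
  have cC: "c C \<in> C" if "C \<in> ?Bs" for C
    unfolding c_def using G.basin_ne[OF that] by (simp add: some_in_eq)
  have cB: "c C \<in> ?B" if "C \<in> ?Bs" for C using cC[OF that] that by (rule UnionI[rotated])
  have kapc: "\<kappa> C $ c C0 = (if c C0 \<in> C then G.Z else 0)" if "C \<in> ?Bs" "C0 \<in> ?Bs" for C C0
    using kap[OF that(1)] G.a_B[OF cB[OF that(2)]] by simp
  have inj: "inj_on \<kappa> ?Bs"
  proof (rule inj_onI)
    fix C1 C2 assume C1: "C1 \<in> ?Bs" and C2: "C2 \<in> ?Bs" and eq: "\<kappa> C1 = \<kappa> C2"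
    have "\<kappa> C1 $ c C1 = G.Z" using kapc[OF C1 C1] cC[OF C1] by simp
    then have "\<kappa> C2 $ c C1 = G.Z" using eq by simp
    then have "c C1 \<in> C2" using kapc[OF C2 C1] G.Z_nz by (auto split: if_splits)
    then show "C1 = C2" using G.basin_disj[OF C1 C2 cC[OF C1]] by simp
  qed
  have span1: "vec.span (\<kappa> ` ?Bs) \<subseteq> {x. transpose \<Omega> *v x = 0}"
  proof
    fix x assume "x \<in> vec.span (\<kappa> ` ?Bs)"
    then have "transpose \<Omega> *v x = 0"
      by (rule vec.span_induct[where P = "\<lambda>x. transpose \<Omega> *v x = 0", OF _ vec.subspace_kernel]) (use kin in auto)
    then show "x \<in> {x. transpose \<Omega> *v x = 0}" by simp
  qed
  have span2: "{x. transpose \<Omega> *v x = 0} \<subseteq> vec.span (\<kappa> ` ?Bs)"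
  proof
    fix x assume x: "x \<in> {x. transpose \<Omega> *v x = 0}"
    define s where "s = (\<Sum>C\<in>?Bs. (x $ c C / G.Z) *s \<kappa> C)"
    have sspan: "s \<in> vec.span (\<kappa> ` ?Bs)"
      unfolding s_def by (intro vec.span_sum vec.span_scale vec.span_base) simp
    have "s \<in> {x. transpose \<Omega> *v x = 0}"
      using sspan span1 by blast
    then have y0: "transpose \<Omega> *v (x - s) = 0" using x
      by (simp add: matrix_vector_mult_diff_distrib)
    have yB: "(x - s) $ i = 0" if i: "i \<in> ?B" for i
    proof -
      obtain C0 where C0: "C0 \<in> ?Bs" "i \<in> C0" using i by (rule UnionE)
      have "s $ i = (\<Sum>C\<in>?Bs. (x $ c C / G.Z) * (if i \<in> C then G.Z else 0))"
        unfolding s_def sum_component vector_smult_component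
      proof (rule sum.cong[OF refl])
        fix C assume C: "C \<in> ?Bs"
        show "x $ c C / G.Z * \<kappa> C $ i = x $ c C / G.Z * (if i \<in> C then G.Z else 0)"
          using kap[OF C] G.a_B[OF i] by simp
      qed
      also have "\<dots> = x $ c C0 / G.Z * G.Z" by (rule G.sum_basin_delta[OF C0])
      also have "\<dots> = x $ c C0" using G.Z_nz by simp
      also have "\<dots> = x $ i"
        using G.harmc_const[OF C0(1) _ cC[OF C0(1)] C0(2), of "\<lambda>j. x $ j"] x kerc by simp
      finally show ?thesis by simp
    qed
    have "\<forall>k. G.harmc (\<lambda>j. (x - s) $ j) k" using y0 kerc by blast
    then have "(x - s) $ z = 0" for z using G.harmc_zero[of "\<lambda>j. (x - s) $ j" z] yB by blast
    then have "x = s" by (simp add: vec_eq_iff)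
    then show "x \<in> vec.span (\<kappa> ` ?Bs)" using sspan by simp
  qed
  have indep: "vec.independent (\<kappa> ` ?Bs)"
  proof
    assume "vec.dependent (\<kappa> ` ?Bs)"
    then obtain u where u: "\<exists>v\<in>\<kappa> ` ?Bs. u v \<noteq> 0" "(\<Sum>v\<in>\<kappa> ` ?Bs. u v *s v) = 0"
      using vec.dependent_finite[of "\<kappa> ` ?Bs"] by auto
    obtain C0 where C0: "C0 \<in> ?Bs" "u (\<kappa> C0) \<noteq> 0" using u(1) by blast
    have "(\<Sum>C\<in>?Bs. u (\<kappa> C) *s \<kappa> C) = 0" using u(2) sum.reindex[OF inj, of "\<lambda>v. u v *s v"] by simp
    then have "(\<Sum>C\<in>?Bs. u (\<kappa> C) *s \<kappa> C) $ c C0 = 0" by simp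
    moreover have "(\<Sum>C\<in>?Bs. u (\<kappa> C) *s \<kappa> C) $ c C0 = (\<Sum>C\<in>?Bs. u (\<kappa> C) * (if c C0 \<in> C then G.Z else 0))"
      unfolding sum_component vector_smult_component using kapc[OF _ C0(1)] by (intro sum.cong) auto
    moreover have "\<dots> = u (\<kappa> C0) * G.Z" by (rule G.sum_basin_delta[OF C0(1) cC[OF C0(1)]])
    ultimately show False using C0(2) G.Z_nz by simp
  qed
  show ?thesis using span1 span2 indep inj by blast
qed


end
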